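(* Let $p>1$ and let $\widetilde{T}_0, T$ be constants with $0\le\widetilde{T}_0<T$. Suppose that $A\in C^1([\widetilde{T}_0,T))$, $B\in C^1([0,T))$ and $m\in C^1([0,T))$ are strictly positive functions, that $B$ is decreasing, and that there are constants $\overline{m},\underline{m}>0$ with $\underline{m}\le m(t)\le\overline{m}$ for $t\ge0$. Define \[ h(t):=B(t)^{1/2}A(t)^{(p-1)/2-\delta}, \] where $\delta$ is a constant with $0<\delta<(p-1)/2$ such that $h'(t)\ge0$ for $t\ge\widetilde{T}_0$. Assume that $F\in C^2([0,T))$ satisfies \[ F(t)\ge A(t)\ \text{for } t\ge\widetilde{T}_0,\qquad \{m(t)F'(t)\}'\ge B(t)|F(t)|^p\ \text{for } t\ge0, \] \[ F(0)\ge0,\quad F'(0)\ge0,\quad F(0)+F'(0)>0 . \] If $F'(0)=0$, suppose moreover that there exists a time $\widetilde{t}>0$ such that $F(\widetilde{t})\ge 2F(0)$. Define $\widetilde{T}_1:=\overline{m}\,\underline{m}^{-1}F(0)/F'(0)$ if $F'(0)\ne0$, and $\widetilde{T}_1:=\widetilde{t}$ if $F'(0)=0$. Then, for $\widetilde{T}\ge\max\{\widetilde{T}_0,\widetilde{T}_1\}$, we have $T\le 3\widetilde{T}$, provided that \[ \widetilde{T}\,h(\widetilde{T})\,A(\widetilde{T})^{\delta}\ge \delta^{-1}\,\overline{m}\sqrt{(p+1)/\underline{m}} . \] *)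

theory Defs
  imports "HOL-Analysis.Analysis"
begin

end

theory Submission
  imports Defs
begin
lemma der_at:
  assumes "(f has_real_derivative D) (at x within {lo..<hi})" "lo < x" "x < hi"
  shows "(f has_real_derivative D) (at x)"
proof -
  have "x \<in> interior {lo..<hi}" using assms by simp
  then have "at x within {lo..<hi} = at x" by (rule at_within_interior)
  then show ?thesis using assms(1) by simp
qed

lemma cont_ex:
  assumes "\<forall>x\<in>{lo..<hi}. \<exists>D. (f has_real_derivative D) (at x within {lo..<hi}) \<and> P x D"
  shows "continuous_on {lo..<hi} f"
  unfolding continuous_on_eq_continuous_within
  using assms DERIV_continuous by blast

lemma incr:
  fixes f :: "real \<Rightarrow> real"
  assumes "\<forall>x\<in>{lo..<hi}. \<exists>D. (f has_real_derivative D) (at x within {lo..<hi}) \<and> D \<ge> 0"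
    "lo \<le> a" "a \<le> b" "b < hi"
  shows "f a \<le> f b"
proof (rule DERIV_nonneg_imp_increasing_open[OF assms(3)])
  fix x assume "a < x" "x < b"
  then show "\<exists>y. (f has_real_derivative y) (at x) \<and> 0 \<le> y"
    using assms der_at[of f _ x lo hi] by (meson atLeastLessThan_iff less_le_trans le_less_trans less_imp_le)
next
  have "continuous_on {lo..<hi} f" using cont_ex[OF assms(1)] .
  then show "continuous_on {a..b} f" by (rule continuous_on_subset) (use assms in auto)
qed

theorem lemma3p1:
  fixes p T0 T \<delta> mup mlow Tt tt :: real
    and A A' B B' m m' F F' F'' :: "real \<Rightarrow> real"
  assumes p: "p > 1"
    and T0T: "0 \<le> T0" "T0 < T"
    and A_C1: "\<forall>t\<in>{T0..<T}. (A has_real_derivative A' t) (at t within {T0..<T})"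
              "continuous_on {T0..<T} A'"
    and B_C1: "\<forall>t\<in>{0..<T}. (B has_real_derivative B' t) (at t within {0..<T})"
              "continuous_on {0..<T} B'"
    and m_C1: "\<forall>t\<in>{0..<T}. (m has_real_derivative m' t) (at t within {0..<T})"
              "continuous_on {0..<T} m'"
    and A_pos: "\<forall>t\<in>{T0..<T}. A t > 0"
    and B_pos: "\<forall>t\<in>{0..<T}. B t > 0"
    and m_pos: "\<forall>t\<in>{0..<T}. m t > 0"
    and B_decr: "\<forall>s\<in>{0..<T}. \<forall>t\<in>{0..<T}. s \<le> t \<longrightarrow> B t \<le> B s"
    and m_bounds: "mlow > 0" "mup > 0" "\<forall>t\<in>{0..<T}. mlow \<le> m t \<and> m t \<le> mup"
    and delta: "0 < \<delta>" "\<delta> < (p - 1) / 2"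
    and h_mono: "\<forall>t\<in>{T0..<T}. \<exists>D. ((\<lambda>s. sqrt (B s) * A s powr ((p - 1) / 2 - \<delta>))
                    has_real_derivative D) (at t within {T0..<T}) \<and> D \<ge> 0"
    and F_C2: "\<forall>t\<in>{0..<T}. (F has_real_derivative F' t) (at t within {0..<T})"
              "\<forall>t\<in>{0..<T}. (F' has_real_derivative F'' t) (at t within {0..<T})"
              "continuous_on {0..<T} F''"
    and F_ge_A: "\<forall>t\<in>{T0..<T}. F t \<ge> A t"
    and F_ineq: "\<forall>t\<in>{0..<T}. \<exists>D. ((\<lambda>s. m s * F' s) has_real_derivative D) (at t within {0..<T})
                    \<and> D \<ge> B t * \<bar>F t\<bar> powr p"
    and F_init: "F 0 \<ge> 0" "F' 0 \<ge> 0" "F 0 + F' 0 > 0"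
    and tt: "F' 0 = 0 \<Longrightarrow> 0 < tt \<and> tt < T \<and> F tt \<ge> 2 * F 0"
    and Tt: "Tt \<ge> max T0 (if F' 0 \<noteq> 0 then mup / mlow * F 0 / F' 0 else tt)"
    and cond: "Tt * (sqrt (B Tt) * A Tt powr ((p - 1) / 2 - \<delta>)) * A Tt powr \<delta>
                 \<ge> mup * sqrt ((p + 1) / mlow) / \<delta>"
  shows "T \<le> 3 * Tt"
proof (cases "Tt < T")
  case False
  then show ?thesis using T0T Tt by auto
next
  case TtT: True
  have Tt0: "T0 \<le> Tt" using Tt by simp
  have T0: "0 < T" using T0T by simp
  obtain Dmf where Dmf: "\<forall>t\<in>{0..<T}. ((\<lambda>s. m s * F' s) has_real_derivative Dmf t) (at t within {0..<T})
      \<and> Dmf t \<ge> B t * \<bar>F t\<bar> powr p"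
    using F_ineq by metis
  define g where "g = (\<lambda>s. m s * F' s)"
  have Dg: "\<forall>t\<in>{0..<T}. (g has_real_derivative Dmf t) (at t within {0..<T}) \<and> Dmf t \<ge> B t * \<bar>F t\<bar> powr p"
    using Dmf unfolding g_def by simp
  have Dg0: "\<forall>t\<in>{0..<T}. \<exists>D. (g has_real_derivative D) (at t within {0..<T}) \<and> D \<ge> 0"
  proof
    fix t assume t: "t \<in> {0..<T}"
    have "B t * \<bar>F t\<bar> powr p \<ge> 0" using B_pos t by (simp add: less_imp_le)
    then show "\<exists>D. (g has_real_derivative D) (at t within {0..<T}) \<and> D \<ge> 0" using Dg t by force
  qed
  have g_mono: "g a \<le> g b" if "0 \<le> a" "a \<le> b" "b < T" for a b
    using incr[OF Dg0 that] .
  have g_nn: "g t \<ge> 0" if "0 \<le> t" "t < T" for t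
  proof -
    have "m 0 > 0" using m_pos T0 by simp
    then have "g 0 \<ge> 0" using F_init unfolding g_def by simp
    then show ?thesis using g_mono[of 0 t] that by simp
  qed
  have F'_nn: "F' t \<ge> 0" if "0 \<le> t" "t < T" for t
    using g_nn[OF that] m_pos[rule_format, of t] that unfolding g_def by (simp add: zero_le_mult_iff)
  have F_mono: "F a \<le> F b" if "0 \<le> a" "a \<le> b" "b < T" for a b
    by (rule incr[where lo=0 and hi=T]) (use F_C2(1) F'_nn that in auto)
  have Fpos_2: "(\<forall>t. 0 < t \<longrightarrow> t < T \<longrightarrow> F t > 0) \<and> (\<forall>s. Tt \<le> s \<longrightarrow> s < T \<longrightarrow> F s \<ge> 2 * F 0)"
  proof (cases "F' 0 = 0")
    case True
    then have F0: "F 0 > 0" using F_init by simp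
    have "tt \<le> Tt" "0 < tt" "tt < T" "F tt \<ge> 2 * F 0" using Tt tt True by auto
    then show ?thesis using F_mono F0 by (smt (verit))
  next
    case False
    then have F'0: "F' 0 > 0" using F_init by simp
    define c where "c = mlow * F' 0 / mup"
    have c: "c > 0" using F'0 m_bounds unfolding c_def by simp
    have F'c: "F' t \<ge> c" if "0 \<le> t" "t < T" for t
    proof -
      have "g t \<ge> g 0" using g_mono that by simp
      moreover have "g 0 \<ge> mlow * F' 0" using m_bounds F'0 T0 unfolding g_def by simp
      moreover have "mup * F' t \<ge> g t" using m_bounds F'_nn[OF that] that unfolding g_def
        by (simp add: mult_right_mono)
      ultimately have "mup * F' t \<ge> mlow * F' 0" by simp
      then show ?thesis unfolding c_def using m_bounds by (simp add: pos_divide_le_eq mult.commute)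
    qed
    have lin: "F t \<ge> F 0 + c * t" if "0 \<le> t" "t < T" for t
    proof -
      have "F 0 - c * 0 \<le> F t - c * t"
      proof (rule incr[where lo=0 and hi=T and f="\<lambda>s. F s - c * s"])
        show "\<forall>x\<in>{0..<T}. \<exists>D. ((\<lambda>s. F s - c * s) has_real_derivative D) (at x within {0..<T}) \<and> 0 \<le> D"
        proof
          fix x assume x: "x \<in> {0..<T}"
          have "((\<lambda>s. F s - c * s) has_real_derivative F' x - c * 1) (at x within {0..<T})"
            by (intro derivative_intros) (use F_C2(1) x in auto)
          then show "\<exists>D. ((\<lambda>s. F s - c * s) has_real_derivative D) (at x within {0..<T}) \<and> 0 \<le> D"
            using F'c x by force
        qed
      qed (use that in auto)
      then show ?thesis by simp
    qed
    have "c * (mup / mlow * F 0 / F' 0) = F 0" unfolding c_def using m_bounds F'0 by simp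
    moreover have "mup / mlow * F 0 / F' 0 \<le> Tt" using Tt False by simp
    ultimately have "c * s \<ge> F 0" if "Tt \<le> s" for s using that c
      by (metis mult_left_mono order.trans less_imp_le)
    have A1: "F t > 0" if "0 < t" "t < T" for t
    proof -
      have "c * t > 0" using c that by simp
      then show ?thesis using lin[of t] that F_init by simp
    qed
    have A2: "F s \<ge> 2 * F 0" if "Tt \<le> s" "s < T" for s
    proof -
      have "0 \<le> s" using that Tt0 T0T by simp
      then show ?thesis using lin[of s] \<open>\<And>s. Tt \<le> s \<Longrightarrow> c * s \<ge> F 0\<close>[OF that(1)] that by simp
    qed
    show ?thesis using A1 A2 by blast
  qed
  have Fpos: "F t > 0" if "0 < t" "t < T" for t using Fpos_2 that by blast
  have F2: "F s \<ge> 2 * F 0" if "Tt \<le> s" "s < T" for s using Fpos_2 that by blast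
  have F_nn: "F t \<ge> 0" if "0 \<le> t" "t < T" for t using F_mono[of 0 t] F_init that by simp
  have energy: "(g s)^2 \<ge> 2 * mlow * B s / (p + 1) * (F s powr (p + 1) - F 0 powr (p + 1))"
    if s: "Tt \<le> s" "s < T" for s
  proof -
    have s0: "0 \<le> s" using s Tt0 T0T by simp
    define K where "K = 2 * mlow * B s / (p + 1)"
    define G where "G = (\<lambda>x. (g x)^2 - K * F x powr (p + 1))"
    have "G 0 \<le> G s"
    proof (rule DERIV_nonneg_imp_increasing_open[OF s0])
      fix x assume x: "0 < x" "x < s"
      have xT: "x \<in> {0..<T}" using x s by simp
      have dg: "(g has_real_derivative Dmf x) (at x)" using Dg xT der_at[of g "Dmf x" x 0 T] x s by simp
      have dF: "(F has_real_derivative F' x) (at x)" using F_C2(1) xT der_at[of F "F' x" x 0 T] x s by simp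
      have Fx: "F x > 0" using Fpos x s by simp
      have dG: "(G has_real_derivative (2 * g x * Dmf x - K * ((p + 1) * F x powr p * F' x))) (at x)"
      proof -
        have "((\<lambda>x. F x powr (p + 1)) has_real_derivative (p + 1) * F x powr (p + 1 - of_nat 1) * F' x) (at x)"
          by (rule DERIV_fun_powr[OF dF Fx])
        then have d1: "((\<lambda>x. F x powr (p + 1)) has_real_derivative (p + 1) * F x powr p * F' x) (at x)" by simp
        have d2: "((\<lambda>x. (g x)^2) has_real_derivative 2 * g x * Dmf x) (at x)"
          using DERIV_mult[OF dg dg] by (simp add: power2_eq_square algebra_simps)
        show ?thesis unfolding G_def by (intro DERIV_diff d2 DERIV_cmult d1)
      qed
      have "2 * g x * Dmf x - K * ((p + 1) * F x powr p * F' x) \<ge> 0"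
      proof -
        have mx: "mlow \<le> m x" using m_bounds xT by simp
        have Bx: "B s \<le> B x" using B_decr xT s x by simp
        have Bs: "B s > 0" using B_pos s s0 by simp
        have F'x: "F' x \<ge> 0" using F'_nn xT by simp
        have Fp: "F x powr p \<ge> 0" by simp
        have D: "Dmf x \<ge> B x * F x powr p" using conjunct2[OF Dg[rule_format, OF xT]] Fx by simp
        have "K * ((p + 1) * F x powr p * F' x) = 2 * mlow * B s * F x powr p * F' x"
          unfolding K_def using p by (simp add: field_simps)
        also have "\<dots> \<le> 2 * (m x * F' x) * (B x * F x powr p)"
        proof -
          have "mlow * B s \<le> m x * B x" using mx Bx Bs m_bounds by (intro mult_mono) auto
          then have "mlow * B s * (F x powr p * F' x) \<le> m x * B x * (F x powr p * F' x)"
            using Fp F'x by (intro mult_right_mono) auto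
          then show ?thesis by (simp add: algebra_simps)
        qed
        also have "\<dots> \<le> 2 * g x * Dmf x"
          unfolding g_def using D g_nn[of x] xT unfolding g_def
          by (intro mult_left_mono) auto
        finally show ?thesis by simp
      qed
      then show "\<exists>y. (G has_real_derivative y) (at x) \<and> 0 \<le> y" using dG by blast
    next
      have cg: "continuous_on {0..<T} g" using cont_ex[OF Dg0] .
      have cF: "continuous_on {0..<T} F" using cont_ex[of 0 T F "\<lambda>_ _. True"] F_C2(1) by blast
      have "continuous_on {0..<T} G" unfolding G_def
        by (intro continuous_intros cg continuous_on_powr' cF) (use F_nn p in auto)
      then show "continuous_on {0..s} G" by (rule continuous_on_subset) (use s in auto)
    qed
    then have "(g s)^2 \<ge> K * (F s powr (p + 1) - F 0 powr (p + 1)) + (g 0)^2"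
      unfolding G_def by (simp add: algebra_simps)
    moreover have "(g 0)^2 \<ge> 0" by simp
    ultimately show ?thesis unfolding K_def by linarith
  qed
  define c0 where "c0 = sqrt (mlow / (p + 1)) / mup"
  define hf where "hf = (\<lambda>s. sqrt (B s) * A s powr ((p - 1) / 2 - \<delta>))"
  have c0: "c0 > 0" unfolding c0_def using m_bounds p by simp
  have hf_mono: "hf Tt \<le> hf s" if "Tt \<le> s" "s < T" for s
    unfolding hf_def by (rule incr[where lo=T0 and hi=T, OF h_mono Tt0 that])
  have BTt: "B Tt > 0" using B_pos Tt0 T0T TtT by simp
  have ATt: "A Tt > 0" using A_pos Tt0 T0T TtT by simp
  have hf0: "hf Tt > 0" unfolding hf_def using BTt ATt by simp
  have F'low: "F' s \<ge> c0 * hf Tt * F s powr (1 + \<delta>)" if s: "Tt \<le> s" "s < T" for s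
  proof -
    have s0: "0 \<le> s" using s Tt0 T0T by simp
    have sT0: "s \<in> {T0..<T}" using s Tt0 by simp
    have Fs: "F s > 0" using F_ge_A[rule_format, OF sT0] A_pos[rule_format, OF sT0] by simp
    have Bs: "B s > 0" using B_pos s s0 by simp
    have F00: "F 0 \<ge> 0" using F_init by simp
    have "F 0 powr (p + 1) \<le> (F s / 2) powr (p + 1)"
      using F2[OF s] F00 p by (intro powr_mono2) auto
    also have "\<dots> = F s powr (p + 1) / 2 powr (p + 1)" using Fs by (simp add: powr_divide)
    also have "\<dots> \<le> F s powr (p + 1) / 2"
    proof -
      have "2 powr 1 \<le> (2::real) powr (p + 1)" using p by (intro powr_mono) auto
      then show ?thesis by (intro divide_left_mono) auto
    qed
    finally have "F s powr (p + 1) - F 0 powr (p + 1) \<ge> F s powr (p + 1) / 2" by simp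
    then have "2 * mlow * B s / (p + 1) * (F s powr (p + 1) - F 0 powr (p + 1))
        \<ge> 2 * mlow * B s / (p + 1) * (F s powr (p + 1) / 2)"
      using m_bounds Bs p by (intro mult_left_mono) auto
    moreover have "2 * mlow * B s / (p + 1) * (F s powr (p + 1) / 2) = mlow / (p + 1) * B s * F s powr (p + 1)"
      by (simp add: field_simps)
    ultimately have "(g s)^2 \<ge> mlow / (p + 1) * B s * F s powr (p + 1)" using energy[OF s] by linarith
    then have "sqrt ((g s)^2) \<ge> sqrt (mlow / (p + 1) * B s * F s powr (p + 1))"
      using real_sqrt_le_mono by blast
    moreover have "sqrt ((g s)^2) = g s" using g_nn[OF s0 s(2)] by simp
    moreover have "sqrt (mlow / (p + 1) * B s * F s powr (p + 1))
        = sqrt (mlow / (p + 1)) * sqrt (B s) * F s powr ((p + 1) / 2)"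
      using Fs by (simp only: real_sqrt_mult powr_half_sqrt_powr less_imp_le)
    ultimately have gs: "g s \<ge> sqrt (mlow / (p + 1)) * sqrt (B s) * F s powr ((p + 1) / 2)" by simp
    have ms: "0 < m s" "m s \<le> mup" using m_pos m_bounds s s0 by auto
    have "g s \<le> mup * F' s" unfolding g_def using ms F'_nn[OF s0 s(2)] by (simp add: mult_right_mono)
    with gs have "mup * F' s \<ge> sqrt (mlow / (p + 1)) * sqrt (B s) * F s powr ((p + 1) / 2)" by simp
    then have "F' s \<ge> c0 * sqrt (B s) * F s powr ((p + 1) / 2)"
      unfolding c0_def using m_bounds by (simp add: field_simps)
    moreover have "F s powr ((p + 1) / 2) = F s powr (1 + \<delta>) * F s powr ((p - 1) / 2 - \<delta>)"
      by (simp add: powr_add[symmetric] field_simps)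
    moreover have "F s powr ((p - 1) / 2 - \<delta>) \<ge> A s powr ((p - 1) / 2 - \<delta>)"
      using delta A_pos F_ge_A s Tt0 by (intro powr_mono2) (auto simp: less_imp_le)
    ultimately have "F' s \<ge> c0 * F s powr (1 + \<delta>) * hf s"
      unfolding hf_def using c0 Bs
      by (smt (verit, ccfv_SIG) mult.assoc mult.left_commute mult_left_mono powr_ge_zero real_sqrt_ge_zero)
    moreover have "c0 * F s powr (1 + \<delta>) * hf Tt \<le> c0 * F s powr (1 + \<delta>) * hf s"
      using hf_mono[OF s] c0 by (intro mult_left_mono) auto
    ultimately show ?thesis by (simp add: algebra_simps)
  qed
  have Tt_nn: "0 \<le> Tt" using Tt0 T0T by simp
  have T2: "T \<le> 2 * Tt"
  proof (rule ccontr)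
    assume "\<not> T \<le> 2 * Tt"
    then have t2T: "2 * Tt < T" by simp
    define k where "k = \<delta> * c0 * hf Tt"
    define Phi where "Phi = (\<lambda>t. F t powr (- \<delta>) + k * t)"
    have "Phi Tt \<ge> Phi (2 * Tt)"
    proof (rule DERIV_nonpos_imp_decreasing_open[of Tt "2 * Tt" Phi])
      show "Tt \<le> 2 * Tt" using Tt_nn by simp
    next
      fix x assume x: "Tt < x" "x < 2 * Tt"
      have xT: "x \<in> {0..<T}" using x t2T Tt_nn by simp
      have xT0: "x \<in> {T0..<T}" using x t2T Tt0 by simp
      have Fx: "F x > 0" using F_ge_A[rule_format, OF xT0] A_pos[rule_format, OF xT0] by simp
      have dF: "(F has_real_derivative F' x) (at x)"
        using F_C2(1) xT der_at[of F "F' x" x 0 T] x t2T Tt_nn by simp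
      have "((\<lambda>x. F x powr (- \<delta>)) has_real_derivative (- \<delta>) * F x powr (- \<delta> - of_nat 1) * F' x) (at x)"
        by (rule DERIV_fun_powr[OF dF Fx])
      note dpow = this
      have dP: "(Phi has_real_derivative (- \<delta>) * F x powr (- \<delta> - 1) * F' x + k * 1) (at x)"
        unfolding Phi_def using DERIV_add[OF dpow DERIV_cmult[OF DERIV_ident[of "at x"], of k]] by simp
      have "F x powr (- \<delta> - 1) * F' x \<ge> F x powr (- \<delta> - 1) * (c0 * hf Tt * F x powr (1 + \<delta>))"
        using F'low[of x] x t2T by (intro mult_left_mono) auto
      also have "F x powr (- \<delta> - 1) * (c0 * hf Tt * F x powr (1 + \<delta>)) = c0 * hf Tt"
      proof -
        have "F x powr (- \<delta> - 1) * F x powr (1 + \<delta>) = 1"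
          using Fx by (simp add: powr_add[symmetric])
        then show ?thesis by (simp add: algebra_simps)
      qed
      finally have "\<delta> * (F x powr (- \<delta> - 1) * F' x) \<ge> k"
        unfolding k_def using delta by (simp add: mult_left_mono mult.assoc)
      then have "(- \<delta>) * F x powr (- \<delta> - 1) * F' x + k * 1 \<le> 0" by (simp add: algebra_simps)
      then show "\<exists>y. (Phi has_real_derivative y) (at x) \<and> y \<le> 0" using dP by blast
    next
      have cF: "continuous_on {0..<T} F" using cont_ex[of 0 T F "\<lambda>_ _. True"] F_C2(1) by blast
      have "continuous_on {Tt..2 * Tt} F" by (rule continuous_on_subset[OF cF]) (use Tt_nn t2T in auto)
      moreover have "\<forall>x\<in>{Tt..2 * Tt}. F x > 0"
      proof
        fix x assume "x \<in> {Tt..2 * Tt}"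
        then have xT0: "x \<in> {T0..<T}" using t2T Tt0 by simp
        show "F x > 0" using F_ge_A[rule_format, OF xT0] A_pos[rule_format, OF xT0] by simp
      qed
      ultimately show "continuous_on {Tt..2 * Tt} Phi" unfolding Phi_def
        by (intro continuous_intros continuous_on_powr') auto
    qed
    moreover have "F (2 * Tt) powr (- \<delta>) > 0"
    proof -
      have xT0: "2 * Tt \<in> {T0..<T}" using t2T Tt0 Tt_nn by simp
      show ?thesis using F_ge_A[rule_format, OF xT0] A_pos[rule_format, OF xT0] by simp
    qed
    ultimately have "k * Tt < F Tt powr (- \<delta>)" unfolding Phi_def by linarith
    also have "F Tt powr (- \<delta>) \<le> A Tt powr (- \<delta>)"
      using ATt F_ge_A Tt0 TtT delta by (intro powr_mono2') auto
    finally have "k * Tt < A Tt powr (- \<delta>)" .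
    then have "k * Tt * A Tt powr \<delta> < A Tt powr (- \<delta>) * A Tt powr \<delta>"
      using ATt by (intro mult_strict_right_mono) auto
    also have "A Tt powr (- \<delta>) * A Tt powr \<delta> = 1" using ATt by (simp add: powr_add[symmetric])
    finally have lt: "\<delta> * c0 * (Tt * hf Tt * A Tt powr \<delta>) < 1" unfolding k_def by (simp add: algebra_simps)
    have eq: "mup * sqrt ((p + 1) / mlow) / \<delta> = 1 / (\<delta> * c0)"
      unfolding c0_def using m_bounds p delta by (simp add: real_sqrt_divide field_simps)
    have "Tt * hf Tt * A Tt powr \<delta> \<ge> 1 / (\<delta> * c0)" using cond eq unfolding hf_def by simp
    then have "\<delta> * c0 * (Tt * hf Tt * A Tt powr \<delta>) \<ge> \<delta> * c0 * (1 / (\<delta> * c0))"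
      using delta c0 by (intro mult_left_mono) auto
    then have "\<delta> * c0 * (Tt * hf Tt * A Tt powr \<delta>) \<ge> 1" using delta c0 by simp
    with lt show False by simp
  qed
  then show ?thesis using Tt_nn by simp
qed

end
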